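(* Let $p$ be any prime, and let $n$, $m$, $s$ and $r$ be nonnegative integers such that $n\ge m$, $s\ge 1$, $1\le r\le p^s-1$ and $r$ is not divisible by $p$. Then \[ \binom{np^s}{mp^s+r}\equiv (-1)^{r-1}\, r^{-1}\,(m+1)\binom{n}{m+1}\,p^s \pmod{p^{s+1}}, \] where $r^{-1}$ denotes any integer $r'$ with $rr'\equiv 1 \pmod p$ (the inverse of $r$ modulo $p$).
   Context: Binomial coefficients follow the convention $\binom{l}{t}=0$ if $l<t$ and $\binom{0}{0}=1$. Since the right-hand side carries the factor $p^s$, the congruence modulo $p^{s+1}$ does not depend on the choice of the integer representative of $r^{-1}$ modulo $p$. *)

theory Defs
  imports "HOL-Number_Theory.Number_Theory"
begin

end

theory Submission imports Defs begin

lemma pdvd_binom: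
  fixes p s i :: nat
  assumes p: "prime p" and i: "0 < i" "i < p ^ s"
  shows "p dvd (p ^ s choose i)"
proof (rule ccontr)
  assume np: "\<not> p dvd (p ^ s choose i)"
  obtain i' where i': "i = Suc i'" using i by (cases i) auto
  obtain q' where q': "p ^ s = Suc q'" using i by (cases "p^s") auto
  have "i * (p ^ s choose i) = p ^ s * (q' choose i')"
    using Suc_times_binomial[of i' q'] by (simp add: i' q')
  hence "p ^ s dvd i * (p ^ s choose i)" by simp
  moreover have "coprime (p ^ s) (p ^ s choose i)"
    using np p by (simp add: prime_imp_coprime)
  ultimately have "p ^ s dvd i" using coprime_dvd_mult_left_iff by blast
  with i show False by (simp add: nat_dvd_not_less)
qed

lemma binom_pred:
  fixes p s j :: nat
  assumes p: "prime p"
  shows "j < p ^ s \<Longrightarrow> [int (p ^ s - 1 choose j) = (-1) ^ j] (mod int p)"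
proof (induction j)
  case 0 then show ?case by simp
next
  case (Suc j)
  obtain q' where q': "p ^ s = Suc q'" using Suc by (cases "p^s") auto
  have "p dvd (p ^ s choose Suc j)" using pdvd_binom[OF p, of "Suc j" s] Suc by simp
  hence "int p dvd int (q' choose j) + int (q' choose Suc j)"
    by (simp add: q' flip: of_nat_add)
  hence "[int (q' choose Suc j) = - int (q' choose j)] (mod int p)"
    by (simp add: cong_iff_dvd_diff add.commute)
  moreover have "[int (q' choose j) = (-1) ^ j] (mod int p)" using Suc q' by simp
  ultimately have "[int (q' choose Suc j) = - ((-1) ^ j)] (mod int p)"
    by (metis cong_minus_minus_iff cong_trans)
  then show ?case using q' by simp
qed

lemma lucas_step:
  fixes p q b j :: nat
  assumes p: "prime p" and q: "q = p ^ s" and b: "b < q" and j: "j < q"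
  shows "[(a*q+b) choose (m*q+j) = (a choose m)*(b choose j)] (mod p)"
proof (induction a arbitrary: m)
  case 0
  show ?case
  proof (cases m)
    case 0 then show ?thesis by simp
  next
    case (Suc m')
    then have "b < m*q+j" using b by simp
    then show ?thesis using Suc by (simp add: binomial_eq_0)
  qed
next
  case (Suc a)
  define t where "t = m*q+j"
  define f where "f i = (q choose i) * ((a*q+b) choose (t-i))" for i
  have q0: "q > 0" using b by simp
  have vd: "(Suc a*q+b) choose t = (\<Sum>i\<le>t. f i)"
    using vandermonde[of q "a*q+b" t] by (simp add: f_def add.assoc)
  let ?S = "{i. i \<le> t \<and> (i = 0 \<or> i = q)}"
  let ?R = "{i. i \<le> t \<and> i \<noteq> 0 \<and> i \<noteq> q}"
  have split: "(\<Sum>i\<le>t. f i) = sum f ?S + sum f ?R"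
  proof -
    have e: "{..t} = ?S \<union> ?R" by auto
    have "sum f (?S \<union> ?R) = sum f ?S + sum f ?R"
      by (rule sum.union_disjoint) auto
    then show ?thesis by (simp only: e)
  qed
  have R: "p dvd sum f ?R"
  proof (rule dvd_sum)
    fix i assume "i \<in> ?R"
    then have "0 < i" "i \<noteq> q" by auto
    show "p dvd f i"
    proof (cases "i < q")
      case True
      then show ?thesis using pdvd_binom[OF p \<open>0<i\<close>, of s] q by (simp add: f_def)
    next
      case False
      then show ?thesis using \<open>i \<noteq> q\<close> by (simp add: f_def binomial_eq_0)
    qed
  qed
  have S: "sum f ?S = f 0 + (if q \<le> t then f q else 0)"
  proof (cases "q \<le> t")
    case True
    then have "?S = {0, q}" by auto
    then show ?thesis using True q0 by simp
  next
    case False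
    then have "?S = {0}" by auto
    then show ?thesis using False by simp
  qed
  have main: "[(Suc a*q+b) choose t = f 0 + (if q \<le> t then f q else 0)] (mod p)"
  proof -
    have "[sum f ?S + sum f ?R = sum f ?S + 0] (mod p)"
      using R by (intro cong_add) (auto simp: cong_0_iff)
    then show ?thesis unfolding vd split S by simp
  qed
  show ?case
  proof (cases m)
    case 0
    then have "\<not> q \<le> t" using j t_def by simp
    moreover have "f 0 = (a*q+b) choose (0*q+j)" using 0 by (simp add: f_def t_def)
    ultimately have "[(Suc a*q+b) choose t = (a*q+b) choose (0*q+j)] (mod p)" using main by simp
    moreover have "[(a*q+b) choose (0*q+j) = (a choose 0)*(b choose j)] (mod p)" by (rule Suc.IH)
    ultimately show ?thesis using 0 t_def by (simp add: cong_trans)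
  next
    case (Suc m')
    then have qt: "q \<le> t" using t_def by simp
    have f0: "f 0 = (a*q+b) choose (m*q+j)" by (simp add: f_def t_def)
    have fq: "f q = (a*q+b) choose (m'*q+j)" by (simp add: f_def t_def Suc)
    have "[f 0 + f q = (a choose m)*(b choose j) + (a choose m')*(b choose j)] (mod p)"
      unfolding f0 fq by (intro cong_add Suc.IH)
    moreover have "(a choose m)*(b choose j) + (a choose m')*(b choose j) = (Suc a choose m) * (b choose j)"
      using Suc by (simp add: algebra_simps)
    ultimately have "[f 0 + f q = (Suc a choose m) * (b choose j)] (mod p)" by simp
    moreover have "[(Suc a*q+b) choose t = f 0 + f q] (mod p)" using main qt by simp
    ultimately show ?thesis unfolding t_def by (rule cong_trans[rotated])
  qed
qed

theorem theorem1p1: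
  fixes p n m s r :: nat and r' :: int
  assumes "prime p"
    and "m \<le> n"
    and "1 \<le> s"
    and "1 \<le> r" and "r \<le> p ^ s - 1"
    and "\<not> p dvd r"
    and "[int r * r' = 1] (mod int p)"
  shows "[int ((n * p ^ s) choose (m * p ^ s + r))
          = (-1) ^ (r - 1) * r' * int (m + 1) * int (n choose (m + 1)) * int p ^ s]
          (mod int p ^ (s + 1))"
proof (cases n)
  case 0
  then show ?thesis using assms by (simp add: binomial_eq_0)
next
  case (Suc n')
  note p = assms(1)
  define q where "q = p ^ s"
  have q0: "q > 0" using p q_def by (simp add: prime_gt_0_nat)
  have rq: "r < q" using assms(5) q0 q_def by linarith
  define N' where "N' = n' * q + (q - 1)"
  define K' where "K' = m * q + (r - 1)"
  have N: "n * q = Suc N'" using Suc q0 by (simp add: N'_def algebra_simps)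
  have K: "m * q + r = Suc K'" using assms(4) by (simp add: K'_def)
  define c where "c = Suc N' choose Suc K'"
  define d where "d = N' choose K'"
  have KC: "(m*q+r) * c = n * q * d"
    using Suc_times_binomial[of K' N'] by (simp add: c_def d_def N K)
  have pq: "p dvd q" using assms(3) q_def p by (simp add: dvd_power)
  have cop: "coprime q (m*q+r)"
  proof -
    have "\<not> p dvd (m*q+r)" using pq assms(6) by (metis dvd_add_right_iff dvd_mult)
    then have "coprime p (m*q+r)" using p by (simp add: prime_imp_coprime)
    then show ?thesis by (simp add: q_def)
  qed
  have "q dvd (m*q+r) * c" using KC by simp
  then have "q dvd c" using cop coprime_dvd_mult_right_iff by blast
  then obtain e where ce: "c = q * e" by auto
  have "q * ((m*q+r) * e) = q * (n * d)" using KC ce by (simp add: algebra_simps)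
  then have Ke: "(m*q+r) * e = n * d" using q0 by simp
  have L: "[d = (n' choose m) * ((q - 1) choose (r - 1))] (mod p)"
    unfolding d_def N'_def K'_def
    by (rule lucas_step[OF p q_def]) (use q0 rq in auto)
  have B: "[int ((q - 1) choose (r - 1)) = (-1) ^ (r - 1)] (mod int p)"
    unfolding q_def by (rule binom_pred[OF p]) (use rq q_def in auto)
  have dmod: "[int d = int (n' choose m) * (-1) ^ (r - 1)] (mod int p)"
  proof -
    have "[int d = int (n' choose m) * int ((q - 1) choose (r - 1))] (mod int p)"
      using L by (metis cong_int_iff of_nat_mult)
    then show ?thesis using B by (metis cong_scalar_left cong_trans)
  qed
  have nm: "int n * int (n' choose m) = int (m + 1) * int (n choose (m + 1))"
    using Suc_times_binomial[of m n'] Suc by (metis of_nat_mult Suc_eq_plus1)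
  have rK: "[r' * int (m*q+r) = 1] (mod int p)"
  proof -
    have "[int (m*q+r) = int r] (mod int p)"
      using pq by (simp add: cong_iff_dvd_diff)
    then have "[r' * int (m*q+r) = r' * int r] (mod int p)" by (rule cong_scalar_left)
    then show ?thesis using assms(7) by (simp add: mult.commute cong_trans)
  qed
  have emod: "[int e = (-1) ^ (r - 1) * r' * int (m + 1) * int (n choose (m + 1))] (mod int p)"
  proof -
    have "[int e = r' * int (m*q+r) * int e] (mod int p)"
      using cong_scalar_right[OF rK, of "int e"] by (simp add: cong_sym)
    also have "r' * int (m*q+r) * int e = r' * int n * int d"
    proof -
      have "int (m*q+r) * int e = int n * int d" using arg_cong[OF Ke, of int] by simp
      then show ?thesis by (metis mult.assoc)
    qed
    also have "[r' * int n * int d = r' * int n * (int (n' choose m) * (-1) ^ (r - 1))] (mod int p)"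
      by (rule cong_scalar_left[OF dmod])
    also have "r' * int n * (int (n' choose m) * (-1) ^ (r - 1)) = (-1) ^ (r - 1) * r' * (int n * int (n' choose m))"
      by (simp only: mult_ac)
    also have "\<dots> = (-1) ^ (r - 1) * r' * (int (m + 1) * int (n choose (m + 1)))"
      by (simp only: nm)
    also have "\<dots> = (-1) ^ (r - 1) * r' * int (m + 1) * int (n choose (m + 1))"
      by (simp only: mult.assoc)
    finally show ?thesis .
  qed
  have "int ((n * p ^ s) choose (m * p ^ s + r)) = int q * int e"
    using ce c_def N K q_def by simp
  moreover have "int p ^ (s+1) = int q * int p" by (simp add: q_def)
  ultimately show ?thesis using emod
    unfolding cong_def by (simp add: mod_mult_mult1 q_def mult.commute mult.left_commute)
qed

end
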